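(* Let $F\in L^1(\mathbb T^d;\mathbb H^{m\times n})$, written $F(\boldsymbol\theta)=Z(\boldsymbol\theta)+W(\boldsymbol\theta)\mathbf j$ with $Z,W:\mathbb T^d\to\mathbb C_{\mathbf i}^{m\times n}$, and fix an ordered partition $S_L\dot\cup S_R=\{1,\dots,d\}$. For $\boldsymbol m\in\mathbb Z^d$ define $\tilde{\boldsymbol m}$ by $\tilde m_j=m_j$ for $j\in S_L$ and $\tilde m_j=-m_j$ for $j\in S_R$. Then for every $\boldsymbol m\in\mathbb Z^d$, $$\Phi\bigl(\widehat F^{(S_L,S_R)}(\boldsymbol m)\bigr)=\begin{bmatrix}\widehat Z(\boldsymbol m)&\widehat W(\tilde{\boldsymbol m})\\ -\widehat{\overline W}(-\tilde{\boldsymbol m})&\widehat{\overline Z}(-\boldsymbol m)\end{bmatrix},$$ where hats on the right denote ordinary complex matrix Fourier coefficients $\widehat G(\boldsymbol k)=(2\pi)^{-d}\int_{\mathbb T^d}G(\boldsymbol\theta)e^{-\mathbf i\langle\boldsymbol k,\boldsymbol\theta\rangle}d\boldsymbol\theta$.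
   Context: $\mathbb H$ is the quaternion algebra with units $\mathbf i,\mathbf j,\mathbf k=\mathbf i\mathbf j$; $\mathbb C_{\mathbf i}=\operatorname{span}_{\mathbb R}\{1,\mathbf i\}\cong\mathbb C$; bar is complex conjugation on $\mathbb C_{\mathbf i}$. For $A=Z+W\mathbf j$ ($Z,W\in\mathbb C_{\mathbf i}^{m\times n}$), $\Phi(A)=\begin{bmatrix}Z&W\\-\overline W&\overline Z\end{bmatrix}$. $\mathbb T^d=[-\pi,\pi)^d$ with Lebesgue measure. For $S\subseteq\{1,\dots,d\}$, $\langle\boldsymbol m,\boldsymbol\theta\rangle_S=\sum_{j\in S}m_j\theta_j$. The sandwich Fourier coefficient is $\widehat F^{(S_L,S_R)}(\boldsymbol m)=(2\pi)^{-d}\int_{\mathbb T^d}e^{-\mathbf i\langle\boldsymbol m,\boldsymbol\theta\rangle_{S_L}}F(\boldsymbol\theta)e^{-\mathbf i\langle\boldsymbol m,\boldsymbol\theta\rangle_{S_R}}d\boldsymbol\theta\in\mathbb H^{m\times n}$. *)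

theory Defs
  imports "HOL-Analysis.Analysis"
begin

datatype quat = Quat (q_re: real) (q_i: real) (q_j: real) (q_k: real)

instantiation quat :: "{zero, one, plus, minus, uminus, times}"
begin
definition "0 = Quat 0 0 0 0"
definition "1 = Quat 1 0 0 0"
definition "p + q = Quat (q_re p + q_re q) (q_i p + q_i q) (q_j p + q_j q) (q_k p + q_k q)"
definition "p - q = Quat (q_re p - q_re q) (q_i p - q_i q) (q_j p - q_j q) (q_k p - q_k q)"
definition "- q = Quat (- q_re q) (- q_i q) (- q_j q) (- q_k q)"
text \<open>Hamilton product, with i j = k.\<close>
definition "p * q = Quat
   (q_re p * q_re q - q_i p * q_i q - q_j p * q_j q - q_k p * q_k q)
   (q_re p * q_i q + q_i p * q_re q + q_j p * q_k q - q_k p * q_j q)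
   (q_re p * q_j q - q_i p * q_k q + q_j p * q_re q + q_k p * q_i q)
   (q_re p * q_k q + q_i p * q_j q - q_j p * q_i q + q_k p * q_re q)"
instance ..
end

definition qJ :: quat where "qJ = Quat 0 0 1 0"
definition cq :: "complex \<Rightarrow> quat" where "cq z = Quat (Re z) (Im z) 0 0"

text \<open>Components \<open>Z\<close>, \<open>W\<close> of \<open>q = Z + W j\<close>.\<close>
definition qZ :: "quat \<Rightarrow> complex" where "qZ q = Complex (q_re q) (q_i q)"
definition qW :: "quat \<Rightarrow> complex" where "qW q = Complex (q_j q) (q_k q)"

text \<open>\<open>\<bbbT>\<^sup>d = [-\<pi>,\<pi>)\<^sup>d\<close>, coordinates indexed by the finite type \<open>'d\<close> (d = CARD('d)).\<close>
definition torus :: "(real^'d::finite) set" where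
  "torus = {\<theta>. \<forall>j. - pi \<le> \<theta>$j \<and> \<theta>$j < pi}"

definition ipS :: "'d::finite set \<Rightarrow> int^'d \<Rightarrow> real^'d \<Rightarrow> real" where
  "ipS S m \<theta> = (\<Sum>j\<in>S. of_int (m$j) * \<theta>$j)"

definition qintegral :: "(real^'d::finite \<Rightarrow> quat) \<Rightarrow> quat" where
  "qintegral f = Quat
     (integral\<^sup>L (lebesgue_on torus) (\<lambda>\<theta>. q_re (f \<theta>)))
     (integral\<^sup>L (lebesgue_on torus) (\<lambda>\<theta>. q_i (f \<theta>)))
     (integral\<^sup>L (lebesgue_on torus) (\<lambda>\<theta>. q_j (f \<theta>)))
     (integral\<^sup>L (lebesgue_on torus) (\<lambda>\<theta>. q_k (f \<theta>)))"

definition qscale :: "real \<Rightarrow> quat \<Rightarrow> quat" where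
  "qscale r q = Quat (r * q_re q) (r * q_i q) (r * q_j q) (r * q_k q)"

definition qL1 :: "(real^'d::finite \<Rightarrow> quat^'n::finite^'m::finite) \<Rightarrow> bool" where
  "qL1 F \<longleftrightarrow> (\<forall>a b. integrable (lebesgue_on torus) (\<lambda>\<theta>. q_re (F \<theta> $ a $ b))
                   \<and> integrable (lebesgue_on torus) (\<lambda>\<theta>. q_i (F \<theta> $ a $ b))
                   \<and> integrable (lebesgue_on torus) (\<lambda>\<theta>. q_j (F \<theta> $ a $ b))
                   \<and> integrable (lebesgue_on torus) (\<lambda>\<theta>. q_k (F \<theta> $ a $ b)))"

definition sandwich_fc ::
  "(real^'d::finite \<Rightarrow> quat^'n::finite^'m::finite) \<Rightarrow> 'd set \<Rightarrow> 'd set \<Rightarrow> int^'d \<Rightarrow> quat^'n^'m" where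
  "sandwich_fc F SL SR m = (\<chi> a b. qscale ((2 * pi) powr (- real CARD('d)))
      (qintegral (\<lambda>\<theta>. cq (exp (- \<i> * of_real (ipS SL m \<theta>))) * (F \<theta> $ a $ b)
                        * cq (exp (- \<i> * of_real (ipS SR m \<theta>))))))"

definition cfc :: "(real^'d::finite \<Rightarrow> complex^'n::finite^'m::finite) \<Rightarrow> int^'d \<Rightarrow> complex^'n^'m" where
  "cfc G k = (\<chi> a b. of_real ((2 * pi) powr (- real CARD('d))) *
      integral\<^sup>L (lebesgue_on torus) (\<lambda>\<theta>. G \<theta> $ a $ b * exp (- \<i> * of_real (ipS UNIV k \<theta>))))"

definition cnj_mat :: "complex^'n::finite^'m::finite \<Rightarrow> complex^'n^'m" where
  "cnj_mat A = (\<chi> a b. cnj (A $ a $ b))"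

definition block2 ::
  "complex^'n::finite^'m::finite \<Rightarrow> complex^'n^'m \<Rightarrow> complex^'n^'m \<Rightarrow> complex^'n^'m
   \<Rightarrow> complex^('n + 'n)^('m + 'm)" where
  "block2 A B C D = (\<chi> r c. case r of
       Inl a \<Rightarrow> (case c of Inl b \<Rightarrow> A $ a $ b | Inr b \<Rightarrow> B $ a $ b)
     | Inr a \<Rightarrow> (case c of Inl b \<Rightarrow> C $ a $ b | Inr b \<Rightarrow> D $ a $ b))"

definition Phi :: "quat^'n::finite^'m::finite \<Rightarrow> complex^('n + 'n)^('m + 'm)" where
  "Phi A = block2 (\<chi> a b. qZ (A $ a $ b)) (\<chi> a b. qW (A $ a $ b))
                  (\<chi> a b. - cnj (qW (A $ a $ b))) (\<chi> a b. cnj (qZ (A $ a $ b)))"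

end

theory Submission
  imports Defs
begin

lemma meas_exp: "(\<lambda>\<theta>. exp (- \<i> * of_real (ipS S k \<theta>))) \<in> borel_measurable (lebesgue_on torus)"
proof -
  have [measurable]: "(\<lambda>x. x $ j) \<in> borel_measurable (lebesgue_on torus)" for j :: 'a
    by (intro measurable_restrict_space1 measurable_completion) simp
  show ?thesis unfolding ipS_def by measurable
qed

lemma int_exp:
  fixes f :: "real^'d::finite \<Rightarrow> complex"
  assumes "integrable (lebesgue_on torus) f"
  shows "integrable (lebesgue_on torus) (\<lambda>\<theta>. f \<theta> * exp (- \<i> * of_real (ipS S k \<theta>)))"
proof (rule Bochner_Integration.integrable_bound[OF assms])
  show "(\<lambda>\<theta>. f \<theta> * exp (- \<i> * of_real (ipS S k \<theta>))) \<in> borel_measurable (lebesgue_on torus)"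
    using assms meas_exp by (intro borel_measurable_times) auto
  have "norm (exp (- \<i> * of_real t)) = 1" for t :: real
    by (metis mult.commute mult_minus_left norm_exp_i_times of_real_minus)
  then show "AE x in lebesgue_on torus. norm (f x * exp (- \<i> * of_real (ipS S k x))) \<le> norm (f x)"
    by (simp add: norm_mult)
qed

lemma expi: "exp (- \<i> * of_real t) = Complex (cos t) (- sin t)"
  by (simp add: complex_eq_iff exp_Euler[symmetric] Re_exp Im_exp)

lemma quat_alg:
  fixes A B :: real and z w :: complex
  shows "cq (exp (- \<i> * of_real A)) * (cq z + cq w * qJ) * cq (exp (- \<i> * of_real B)) =
    Quat (Re (z * exp (- \<i> * of_real (A + B)))) (Im (z * exp (- \<i> * of_real (A + B))))
         (Re (w * exp (- \<i> * of_real (A - B)))) (Im (w * exp (- \<i> * of_real (A - B))))"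
  unfolding expi
  by (simp add: cq_def qJ_def times_quat_def plus_quat_def cos_add sin_add cos_diff sin_diff algebra_simps)

lemma ipS_split:
  assumes "SL \<inter> SR = {}" "SL \<union> SR = UNIV"
  shows "ipS UNIV k \<theta> = ipS SL k \<theta> + ipS SR k \<theta>"
  unfolding ipS_def using assms by (metis finite sum.union_disjoint)

lemma ipS_cong: "(\<And>j. j \<in> S \<Longrightarrow> k $ j = k' $ j) \<Longrightarrow> ipS S k \<theta> = ipS S k' \<theta>"
  unfolding ipS_def by (intro sum.cong) auto

lemma ipS_neg: "ipS S (- k) \<theta> = - ipS S k \<theta>"
  unfolding ipS_def by (simp add: sum_negf)

lemma cnj_expi: "cnj z * exp (- \<i> * of_real (- t)) = cnj (z * exp (- \<i> * of_real t))"
  unfolding expi by (simp add: complex_eq_iff)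

theorem mainTheorem3:
  fixes F :: "real^'d::finite \<Rightarrow> quat^'n::finite^'m::finite"
    and Z W :: "real^'d \<Rightarrow> complex^'n^'m"
    and SL SR :: "'d set"
    and m :: "int^'d"
  assumes L1: "qL1 F"
    and decomp: "\<And>\<theta> a b. F \<theta> $ a $ b = cq (Z \<theta> $ a $ b) + cq (W \<theta> $ a $ b) * qJ"
    and part: "SL \<inter> SR = {}" "SL \<union> SR = UNIV"
  shows "let mt = (\<chi> j. if j \<in> SL then m $ j else - (m $ j)) in
         Phi (sandwich_fc F SL SR m) =
           block2 (cfc Z m) (cfc W mt)
                  (- cfc (\<lambda>\<theta>. cnj_mat (W \<theta>)) (- mt)) (cfc (\<lambda>\<theta>. cnj_mat (Z \<theta>)) (- m))"
proof -
  define mt where "mt = (\<chi> j. if j \<in> SL then m $ j else - (m $ j))"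
  define c where "c = (2 * pi) powr (- real CARD('d))"
  define M where "M = lebesgue_on (torus :: (real^'d) set)"
  have FQ: "F \<theta> $ a $ b = Quat (Re (Z \<theta> $ a $ b)) (Im (Z \<theta> $ a $ b)) (Re (W \<theta> $ a $ b)) (Im (W \<theta> $ a $ b))" for \<theta> a b
    by (simp add: decomp cq_def qJ_def times_quat_def plus_quat_def)
  have intZ: "integrable M (\<lambda>\<theta>. Z \<theta> $ a $ b)" for a b
  proof -
    have "integrable M (\<lambda>\<theta>. complex_of_real (Re (Z \<theta> $ a $ b)) + \<i> * complex_of_real (Im (Z \<theta> $ a $ b)))"
    proof -
      have r: "integrable M (\<lambda>\<theta>. Re (Z \<theta> $ a $ b))" "integrable M (\<lambda>\<theta>. Im (Z \<theta> $ a $ b))"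
        using L1 unfolding qL1_def M_def FQ by auto
      show ?thesis using integrable_of_real[OF r(1)] integrable_mult_right[of "\<i>", OF integrable_of_real[OF r(2)]]
        by (rule Bochner_Integration.integrable_add)
    qed
    then show ?thesis by (simp only: complex_eq[symmetric])
  qed
  have intW: "integrable M (\<lambda>\<theta>. W \<theta> $ a $ b)" for a b
  proof -
    have "integrable M (\<lambda>\<theta>. complex_of_real (Re (W \<theta> $ a $ b)) + \<i> * complex_of_real (Im (W \<theta> $ a $ b)))"
    proof -
      have r: "integrable M (\<lambda>\<theta>. Re (W \<theta> $ a $ b))" "integrable M (\<lambda>\<theta>. Im (W \<theta> $ a $ b))"
        using L1 unfolding qL1_def M_def FQ by auto
      show ?thesis using integrable_of_real[OF r(1)] integrable_mult_right[of "\<i>", OF integrable_of_real[OF r(2)]]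
        by (rule Bochner_Integration.integrable_add)
    qed
    then show ?thesis by (simp only: complex_eq[symmetric])
  qed
  have pt: "cq (exp (- \<i> * of_real (ipS SL m \<theta>))) * (F \<theta> $ a $ b) * cq (exp (- \<i> * of_real (ipS SR m \<theta>)))
     = Quat (Re (Z \<theta> $ a $ b * exp (- \<i> * of_real (ipS UNIV m \<theta>)))) (Im (Z \<theta> $ a $ b * exp (- \<i> * of_real (ipS UNIV m \<theta>))))
         (Re (W \<theta> $ a $ b * exp (- \<i> * of_real (ipS UNIV mt \<theta>)))) (Im (W \<theta> $ a $ b * exp (- \<i> * of_real (ipS UNIV mt \<theta>))))" for \<theta> a b
  proof -
    have "ipS UNIV m \<theta> = ipS SL m \<theta> + ipS SR m \<theta>" by (rule ipS_split[OF part])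
    moreover have "ipS UNIV mt \<theta> = ipS SL m \<theta> - ipS SR m \<theta>"
    proof -
      have "ipS SL mt \<theta> = ipS SL m \<theta>" by (rule ipS_cong) (simp add: mt_def)
      moreover have "ipS SR mt \<theta> = ipS SR (- m) \<theta>" using part by (intro ipS_cong) (auto simp: mt_def)
      ultimately show ?thesis using ipS_split[OF part, of mt \<theta>] ipS_neg[of SR m \<theta>] by simp
    qed
    ultimately show ?thesis by (simp only: decomp quat_alg)
  qed
  define IZ where "IZ a b = integral\<^sup>L M (\<lambda>\<theta>. Z \<theta> $ a $ b * exp (- \<i> * of_real (ipS UNIV m \<theta>)))" for a b
  define IW where "IW a b = integral\<^sup>L M (\<lambda>\<theta>. W \<theta> $ a $ b * exp (- \<i> * of_real (ipS UNIV mt \<theta>)))" for a b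
  have iZ: "integrable M (\<lambda>\<theta>. Z \<theta> $ a $ b * exp (- \<i> * of_real (ipS UNIV m \<theta>)))" for a b
    using int_exp intZ unfolding M_def by blast
  have iW: "integrable M (\<lambda>\<theta>. W \<theta> $ a $ b * exp (- \<i> * of_real (ipS UNIV mt \<theta>)))" for a b
    using int_exp intW unfolding M_def by blast
  have S: "sandwich_fc F SL SR m $ a $ b = Quat (c * Re (IZ a b)) (c * Im (IZ a b)) (c * Re (IW a b)) (c * Im (IW a b))" for a b
    unfolding sandwich_fc_def qscale_def qintegral_def pt
    using integral_Re[OF iZ[of a b]] integral_Im[OF iZ[of a b]] integral_Re[OF iW[of a b]] integral_Im[OF iW[of a b]]
    unfolding M_def IZ_def IW_def c_def by (simp only: vec_lambda_beta quat.sel)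
  have c1: "cfc Z m $ a $ b = of_real c * IZ a b" for a b
    by (simp add: cfc_def IZ_def M_def c_def)
  have c2: "cfc W mt $ a $ b = of_real c * IW a b" for a b
    by (simp add: cfc_def IW_def M_def c_def)
  have c3: "cfc (\<lambda>\<theta>. cnj_mat (W \<theta>)) (- mt) $ a $ b = of_real c * cnj (IW a b)" for a b
    unfolding cfc_def IW_def M_def c_def cnj_mat_def by (simp only: vec_lambda_beta ipS_neg cnj_expi Bochner_Integration.integral_cnj)
  have c4: "cfc (\<lambda>\<theta>. cnj_mat (Z \<theta>)) (- m) $ a $ b = of_real c * cnj (IZ a b)" for a b
    unfolding cfc_def IZ_def M_def c_def cnj_mat_def by (simp only: vec_lambda_beta ipS_neg cnj_expi Bochner_Integration.integral_cnj)
  have "Phi (sandwich_fc F SL SR m) =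
           block2 (cfc Z m) (cfc W mt)
                  (- cfc (\<lambda>\<theta>. cnj_mat (W \<theta>)) (- mt)) (cfc (\<lambda>\<theta>. cnj_mat (Z \<theta>)) (- m))"
    unfolding Phi_def block2_def
    by (simp add: vec_eq_iff S c1 c2 c3 c4 qZ_def qW_def complex_eq_iff split: sum.split)
  then show ?thesis unfolding mt_def Let_def .
qed

end
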